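(* Let $R>0$, let $\partial\mathcal{B}=\{\boldsymbol{x}\in\mathbb{R}^d:\|\boldsymbol{x}\|_2=R\}$, and let $\boldsymbol{x}_0\in\mathbb{R}^d$ with $\boldsymbol{x}_0\neq0$ and $\|\boldsymbol{x}_0\|_2\neq R$. Let $\boldsymbol{x}^*=R\boldsymbol{x}_0/\|\boldsymbol{x}_0\|_2$ be the closest point of $\partial\mathcal{B}$ to $\boldsymbol{x}_0$ and $\mathcal{T}=\{\boldsymbol{x}:\langle\boldsymbol{x}-\boldsymbol{x}^*,\boldsymbol{x}^*\rangle=0\}$ the tangent hyperplane to $\partial\mathcal{B}$ at $\boldsymbol{x}^*$. Let $\mathcal{S}\subseteq\mathbb{R}^d$ be a linear subspace with orthogonal projection $\mathbf{P}_{\mathcal S}$ such that $\mathbf{P}_{\mathcal S}\boldsymbol{x}_0\neq0$ and such that there exists $\boldsymbol{r}\in\mathcal S$ with $\boldsymbol{x}_0+\boldsymbol{r}\in\partial\mathcal{B}$. Let $\boldsymbol{r}^{\mathcal T}_{\mathcal S}$ be the minimizer of $\|\boldsymbol{r}\|_2$ over $\{\boldsymbol{r}\in\mathcal S:\boldsymbol{x}_0+\boldsymbol{r}\in\mathcal T\}$ and let $\boldsymbol{r}^{\mathcal B}_{\mathcal S}$ be any minimizer of $\|\boldsymbol{r}\|_2$ over $\{\boldsymbol{r}\in\mathcal S:\boldsymbol{x}_0+\boldsymbol{r}\in\partial\mathcal B\}$. Then $\boldsymbol{r}^{\mathcal T}_{\mathcal S}$ and $\boldsymbol{r}^{\mathcal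 B}_{\mathcal S}$ are both scalar multiples of $\mathbf{P}_{\mathcal S}\boldsymbol{x}_0$; in particular they are collinear. *)

theory Defs
  imports "HOL-Analysis.Analysis"
begin

definition is_orth_proj :: "'a::euclidean_space set \<Rightarrow> ('a \<Rightarrow> 'a) \<Rightarrow> bool" where
  "is_orth_proj S P \<longleftrightarrow> (\<forall>x. P x \<in> S \<and> (\<forall>y\<in>S. (x - P x) \<bullet> y = 0))"

definition is_norm_minimizer :: "'a::euclidean_space set \<Rightarrow> 'a \<Rightarrow> bool" where
  "is_norm_minimizer A r \<longleftrightarrow> r \<in> A \<and> (\<forall>s\<in>A. norm r \<le> norm s)"

end

theory Submission
  imports Defs
begin

lemma decomp:
  fixes p r :: "'a::euclidean_space"
  assumes "p \<noteq> 0"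
  defines "a \<equiv> (r \<bullet> p) / (p \<bullet> p)"
  shows "(r - a *\<^sub>R p) \<bullet> p = 0"
    and "r \<bullet> r = a^2 * (p \<bullet> p) + (r - a *\<^sub>R p) \<bullet> (r - a *\<^sub>R p)"
proof -
  have pp: "p \<bullet> p \<noteq> 0" using assms by simp
  show 1: "(r - a *\<^sub>R p) \<bullet> p = 0" using pp unfolding a_def by (simp add: inner_diff_left)
  have "r = a *\<^sub>R p + (r - a *\<^sub>R p)" by simp
  hence "r \<bullet> r = (a *\<^sub>R p + (r - a *\<^sub>R p)) \<bullet> (a *\<^sub>R p + (r - a *\<^sub>R p))" by simp
  also have "\<dots> = a^2 * (p \<bullet> p) + 2 * a * ((r - a *\<^sub>R p) \<bullet> p) + (r - a *\<^sub>R p) \<bullet> (r - a *\<^sub>R p)"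
    by (simp add: inner_add_left inner_add_right inner_commute power2_eq_square algebra_simps)
  finally show "r \<bullet> r = a^2 * (p \<bullet> p) + (r - a *\<^sub>R p) \<bullet> (r - a *\<^sub>R p)" using 1 by simp
qed

lemma norm_le_inner: "norm (x::'a::real_inner) \<le> norm y \<longleftrightarrow> x \<bullet> x \<le> y \<bullet> y"
  by (simp add: norm_eq_sqrt_inner)

theorem lemma6:
  fixes R :: real and x0 :: "'a::euclidean_space" and S :: "'a set"
    and P :: "'a \<Rightarrow> 'a" and rT rB :: 'a
  assumes "R > 0"
    and "x0 \<noteq> 0" and "norm x0 \<noteq> R"
    and "subspace S" and "is_orth_proj S P" and "P x0 \<noteq> 0"
    and "\<exists>r\<in>S. x0 + r \<in> sphere 0 R"
    and "is_norm_minimizer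
           {r \<in> S. x0 + r \<in> {x. (x - (R / norm x0) *\<^sub>R x0) \<bullet> ((R / norm x0) *\<^sub>R x0) = 0}} rT"
    and "is_norm_minimizer {r \<in> S. x0 + r \<in> sphere 0 R} rB"
  shows "(\<exists>a::real. rT = a *\<^sub>R P x0) \<and> (\<exists>b::real. rB = b *\<^sub>R P x0)"
proof -
  define p where "p = P x0"
  have p0: "p \<noteq> 0" using assms(6) p_def by simp
  have ppos: "p \<bullet> p > 0" using p0 by simp
  have pS: "p \<in> S" using assms(5) unfolding is_orth_proj_def p_def by blast
  have orth: "\<And>y. y \<in> S \<Longrightarrow> (x0 - p) \<bullet> y = 0" using assms(5) unfolding is_orth_proj_def p_def by blast
  have rx: "\<And>r. r \<in> S \<Longrightarrow> r \<bullet> x0 = r \<bullet> p"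
  proof -
    fix r assume "r \<in> S"
    from orth[OF this] show "r \<bullet> x0 = r \<bullet> p" by (simp add: inner_diff_left inner_diff_right inner_commute)
  qed
  have px: "p \<bullet> x0 = p \<bullet> p" using rx[OF pS] .
  define c where "c = R / norm x0"
  have c0: "c \<noteq> 0" using assms(1,2) c_def by simp
  have Tiff: "\<And>r. (x0 + r - c *\<^sub>R x0) \<bullet> (c *\<^sub>R x0) = 0 \<longleftrightarrow> x0 \<bullet> x0 + r \<bullet> x0 - c * (x0 \<bullet> x0) = 0"
    using c0 by (simp add: inner_add_left inner_diff_left)
  have sq: "\<And>r. (x0 + r) \<bullet> (x0 + r) = x0 \<bullet> x0 + 2 * (r \<bullet> x0) + r \<bullet> r"
    by (simp add: inner_add_left inner_add_right inner_commute)
  have sph: "\<And>v. v \<in> sphere 0 R \<longleftrightarrow> v \<bullet> v = R^2"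
    using assms(1) by (auto simp: norm_eq_sqrt_inner) 
  have T: "\<exists>a. rT = a *\<^sub>R p"
  proof -
    define a where "a = (rT \<bullet> p) / (p \<bullet> p)"
    define w where "w = rT - a *\<^sub>R p"
    have rTS: "rT \<in> S" and rTT: "(x0 + rT - c *\<^sub>R x0) \<bullet> (c *\<^sub>R x0) = 0"
      and rTmin: "\<And>s. s \<in> S \<Longrightarrow> (x0 + s - c *\<^sub>R x0) \<bullet> (c *\<^sub>R x0) = 0 \<Longrightarrow> norm rT \<le> norm s"
      using assms(8) unfolding is_norm_minimizer_def c_def by auto
    have wp: "w \<bullet> p = 0" and rr: "rT \<bullet> rT = a^2 * (p \<bullet> p) + w \<bullet> w"
      using decomp[OF p0, of rT] unfolding a_def w_def by auto
    have sS: "a *\<^sub>R p \<in> S" using pS assms(4) by (simp add: subspace_scale)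
    have "(a *\<^sub>R p) \<bullet> x0 = rT \<bullet> x0"
      using px rx[OF rTS] ppos unfolding a_def by simp
    hence "(x0 + a *\<^sub>R p - c *\<^sub>R x0) \<bullet> (c *\<^sub>R x0) = 0" using rTT Tiff by metis
    from rTmin[OF sS this] have "rT \<bullet> rT \<le> (a *\<^sub>R p) \<bullet> (a *\<^sub>R p)" using norm_le_inner by blast
    hence "w \<bullet> w \<le> 0" using rr by (simp add: power2_eq_square)
    hence "w = 0" using inner_ge_zero[of w] by (simp add: order_antisym)
    thus ?thesis unfolding w_def by auto
  qed
  have B: "\<exists>a. rB = a *\<^sub>R p"
  proof (rule ccontr)
    assume nb: "\<not> (\<exists>a. rB = a *\<^sub>R p)"
    define a where "a = (rB \<bullet> p) / (p \<bullet> p)"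
    define w where "w = rB - a *\<^sub>R p"
    have rBS: "rB \<in> S" and rBB: "(x0 + rB) \<bullet> (x0 + rB) = R^2"
      and rBmin: "\<And>s. s \<in> S \<Longrightarrow> (x0 + s) \<bullet> (x0 + s) = R^2 \<Longrightarrow> norm rB \<le> norm s"
      using assms(9) sph unfolding is_norm_minimizer_def by auto
    have wp: "w \<bullet> p = 0" and rr: "rB \<bullet> rB = a^2 * (p \<bullet> p) + w \<bullet> w"
      using decomp[OF p0, of rB] unfolding a_def w_def by auto
    have w0: "w \<noteq> 0" using nb unfolding w_def by auto
    define t where "t = (w \<bullet> w) / (p \<bullet> p)"
    have tpos: "t > 0" using w0 ppos unfolding t_def by simp
    define b where "b = sqrt ((a+1)^2 + t) - 1"
    have bb: "(b+1)^2 = (a+1)^2 + t" unfolding b_def using tpos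
      by (simp add: add_nonneg_pos)
    have bgt: "b + 1 > a + 1"
    proof -
      have "sqrt ((a+1)^2) < sqrt ((a+1)^2 + t)" using tpos by (subst real_sqrt_less_iff) simp
      moreover have "a + 1 \<le> sqrt ((a+1)^2)" by simp
      ultimately show ?thesis unfolding b_def by simp
    qed
    have ww: "w \<bullet> w = t * (p \<bullet> p)" unfolding t_def using ppos by simp
    have sS: "b *\<^sub>R p \<in> S" using pS assms(4) by (simp add: subspace_scale)
    have rBx: "rB \<bullet> x0 = a * (p \<bullet> p)" using rx[OF rBS] ppos unfolding a_def by simp
    have "(x0 + b *\<^sub>R p) \<bullet> (x0 + b *\<^sub>R p) = x0 \<bullet> x0 + (p \<bullet> p) * ((b+1)^2 - 1)"
      using sq[of "b *\<^sub>R p"] px by (simp add: power2_eq_square algebra_simps)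
    also have "\<dots> = x0 \<bullet> x0 + 2 * (rB \<bullet> x0) + rB \<bullet> rB"
      unfolding bb rBx rr ww by (simp add: power2_eq_square algebra_simps)
    also have "\<dots> = R^2" using rBB sq by simp
    finally have "rB \<bullet> rB \<le> (b *\<^sub>R p) \<bullet> (b *\<^sub>R p)"
      using rBmin[OF sS] norm_le_inner by blast
    hence "(a^2 + t) * (p \<bullet> p) \<le> b^2 * (p \<bullet> p)" using rr ww by (simp add: power2_eq_square algebra_simps)
    hence le: "a^2 + t \<le> b^2" using ppos by simp
    have "b^2 = (b+1)^2 - 2*(b+1) + 1" by (simp add: power2_eq_square algebra_simps)
    also have "\<dots> < (a+1)^2 + t - 2*(a+1) + 1" using bb bgt by simp
    also have "\<dots> = a^2 + t" by (simp add: power2_eq_square algebra_simps)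
    finally show False using le by simp
  qed
  show ?thesis using T B p_def by auto
qed

end
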